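(* Let $f\in\mathbb{R}^{d_1\times\cdots\times d_m}$, $f\ge0$, be weakly irreducible and $1<p_1,\ldots,p_m<\infty$ such that there is $i\in[m]$ with $(m-1)p_i'\le p_k$ for every $k\in[m]\setminus\{i\}$. Define $\mu:\mathcal S^{d-d_i}_{++}\times\mathcal S^{d-d_i}_{++}\to\mathbb{R}$ by $$\mu(\mathbf x,\mathbf y)=\ln\Bigg(\prod_{l\in[m]\setminus\{i\}}\frac{\max_{j_l\in[d_l]}(x_{l,j_l}/y_{l,j_l})^{p_l-1}}{\min_{j_l\in[d_l]}(x_{l,j_l}/y_{l,j_l})^{p_l-1}}\Bigg)$$ and $G:\mathcal S^{d-d_i}_{++}\to\mathcal S^{d-d_i}_{++}$ by $G(\mathbf x)=\big(s_{i,k}(\mathbf x)/\|s_{i,k}(\mathbf x)\|_{p_k}\big)_{k\in[m]\setminus\{i\}}$. Then $\mu(G(\mathbf x),G(\mathbf y))\le\mu(\mathbf x,\mathbf y)$ for all $\mathbf x,\mathbf y\in\mathcal S^{d-d_i}_{++}$.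
   Context: $f$ is identified with the multilinear form $f(\mathbf x)=\sum f_{j_1,\ldots,j_m}x_{1,j_1}\cdots x_{m,j_m}$; $\nabla_kf(\mathbf x)$ is the vector of partials $\partial f/\partial x_{k,j_k}$ (independent of $\mathbf x_k$, so $\nabla_if$ is defined on $\mathcal R^{d-d_i}=\prod_{k\ne i}\mathbb{R}^{d_k}$). $p'=p/(p-1)$; $\psi_q(\mathbf y)_j=|y_j|^{q-1}\mathrm{sign}(y_j)$. $\mathcal S^{d-d_i}_{++}=\{\mathbf x\in\mathcal R^{d-d_i}:\mathbf x>0,\|\mathbf x_k\|_{p_k}=1\ \forall k\ne i\}$. For $k\ne i$, $s_{i,k}(\mathbf x)=\psi_{p_k'}\big(\nabla_kf(\mathbf x_1,\ldots,\mathbf x_{i-1},\psi_{p_i'}(\nabla_if(\mathbf x)),\mathbf x_{i+1},\ldots,\mathbf x_m)\big)$ (entrywise positive for $\mathbf x>0$ under weak irreducibility). Weak irreducibility: the undirected graph on $\bigcup_k\{k\}\times[d_k]$ with $(k,j_k)\sim(l,j_l)$ ($k\ne l$) iff $f_{j_1,\ldots,j_m}>0$ for some choice of the remaining indices, is connected. *)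

theory Defs
  imports Complex_Main "HOL-Library.FuncSet"
begin

text \<open>Conventions: modes are indexed by 0..m-1, entries of mode k by 0..d k - 1.
 A tensor is a function from index tuples (nat => nat) to reals; only the tuples in
 tidx m d matter. A point of a product of spaces R^{d_k} is a function x :: nat => nat => real,
 with x k j the j-th entry of the k-th block.\<close>

definition tidx :: "nat \<Rightarrow> (nat \<Rightarrow> nat) \<Rightarrow> (nat \<Rightarrow> nat) set" where
  "tidx m d = PiE {..<m} (\<lambda>k. {..<d k})"

definition conj_exp :: "real \<Rightarrow> real" where
  "conj_exp p = p / (p - 1)"

definition psi :: "real \<Rightarrow> (nat \<Rightarrow> real) \<Rightarrow> (nat \<Rightarrow> real)" where
  "psi q y = (\<lambda>j. \<bar>y j\<bar> powr (q - 1) * sgn (y j))"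

definition pnorm :: "real \<Rightarrow> nat \<Rightarrow> (nat \<Rightarrow> real) \<Rightarrow> real" where
  "pnorm p n v = (\<Sum>j<n. \<bar>v j\<bar> powr p) powr (1 / p)"

text \<open>Partial gradient of the multilinear form with respect to block k (independent of x k).\<close>
definition grad :: "nat \<Rightarrow> (nat \<Rightarrow> nat) \<Rightarrow> ((nat \<Rightarrow> nat) \<Rightarrow> real) \<Rightarrow> nat
    \<Rightarrow> (nat \<Rightarrow> nat \<Rightarrow> real) \<Rightarrow> (nat \<Rightarrow> real)" where
  "grad m d f k x = (\<lambda>a. \<Sum>J\<in>{J\<in>tidx m d. J k = a}. f J * (\<Prod>l\<in>{..<m}-{k}. x l (J l)))"

definition weakly_irreducible :: "nat \<Rightarrow> (nat \<Rightarrow> nat) \<Rightarrow> ((nat \<Rightarrow> nat) \<Rightarrow> real) \<Rightarrow> bool" where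
  "weakly_irreducible m d f \<longleftrightarrow>
     (let V = {(k, a). k < m \<and> a < d k};
          E = {((k, a), (l, b)). (k, a) \<in> V \<and> (l, b) \<in> V \<and> k \<noteq> l \<and>
                 (\<exists>J\<in>tidx m d. J k = a \<and> J l = b \<and> f J > 0)}
      in \<forall>u\<in>V. \<forall>v\<in>V. (u, v) \<in> E\<^sup>*)"

text \<open>s_{i,k}(x); the i-th block of x is irrelevant (it is overwritten).\<close>
definition s_map :: "nat \<Rightarrow> (nat \<Rightarrow> nat) \<Rightarrow> ((nat \<Rightarrow> nat) \<Rightarrow> real) \<Rightarrow> (nat \<Rightarrow> real)
    \<Rightarrow> nat \<Rightarrow> nat \<Rightarrow> (nat \<Rightarrow> nat \<Rightarrow> real) \<Rightarrow> (nat \<Rightarrow> real)" where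
  "s_map m d f p i k x =
     psi (conj_exp (p k)) (grad m d f k (x(i := psi (conj_exp (p i)) (grad m d f i x))))"

definition S_pp :: "nat \<Rightarrow> (nat \<Rightarrow> nat) \<Rightarrow> (nat \<Rightarrow> real) \<Rightarrow> nat \<Rightarrow> (nat \<Rightarrow> nat \<Rightarrow> real) set" where
  "S_pp m d p i = {x. \<forall>k<m. k \<noteq> i \<longrightarrow> (\<forall>j<d k. x k j > 0) \<and> pnorm (p k) (d k) (x k) = 1}"

definition G_map :: "nat \<Rightarrow> (nat \<Rightarrow> nat) \<Rightarrow> ((nat \<Rightarrow> nat) \<Rightarrow> real) \<Rightarrow> (nat \<Rightarrow> real)
    \<Rightarrow> nat \<Rightarrow> (nat \<Rightarrow> nat \<Rightarrow> real) \<Rightarrow> (nat \<Rightarrow> nat \<Rightarrow> real)" where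
  "G_map m d f p i x = (\<lambda>k j. s_map m d f p i k x j / pnorm (p k) (d k) (s_map m d f p i k x))"

definition mu :: "nat \<Rightarrow> (nat \<Rightarrow> nat) \<Rightarrow> (nat \<Rightarrow> real) \<Rightarrow> nat
    \<Rightarrow> (nat \<Rightarrow> nat \<Rightarrow> real) \<Rightarrow> (nat \<Rightarrow> nat \<Rightarrow> real) \<Rightarrow> real" where
  "mu m d p i x y = ln (\<Prod>l\<in>{..<m}-{i}.
      Max ((\<lambda>j. (x l j / y l j) powr (p l - 1)) ` {..<d l}) /
      Min ((\<lambda>j. (x l j / y l j) powr (p l - 1)) ` {..<d l}))"

end

theory Submission
  imports Defs
begin


lemma max_min_bound:
  fixes q :: "nat \<Rightarrow> real"
  assumes "finite S" "S \<noteq> {}" "0 < \<alpha>" "\<And>j. j \<in> S \<Longrightarrow> \<alpha> \<le> q j \<and> q j \<le> \<beta>"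
  shows "0 < Max (q ` S) / Min (q ` S) \<and> ln (Max (q ` S) / Min (q ` S)) \<le> ln \<beta> - ln \<alpha>"
proof -
  have fin: "finite (q ` S)" "q ` S \<noteq> {}" using assms by auto
  have mx: "Max (q ` S) \<le> \<beta>" using fin assms(4) by (simp add: Max_le_iff)
  have mn: "\<alpha> \<le> Min (q ` S)" using fin assms(4) by (simp add: Min_ge_iff)
  obtain j0 where j0: "j0 \<in> S" using assms(2) by auto
  have mm: "Min (q ` S) \<le> Max (q ` S)" using fin j0 by (meson Max_ge Min_le order_trans imageI)
  have b: "\<alpha> \<le> \<beta>" using mx mn mm by linarith
  have pos: "0 < Max (q ` S) / Min (q ` S)" using mn mm assms(3) by auto
  have "ln (Max (q ` S) / Min (q ` S)) = ln (Max (q ` S)) - ln (Min (q ` S))"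
    using mn mm assms(3) by (simp add: ln_div)
  also have "\<dots> \<le> ln \<beta> - ln \<alpha>" proof -
    have "ln (Max (q ` S)) \<le> ln \<beta>" using mn mm mx assms(3) by simp
    moreover have "ln \<alpha> \<le> ln (Min (q ` S))" using mn assms(3) by simp
    ultimately show ?thesis by linarith
  qed
  finally show ?thesis using pos by simp
qed

lemma max_min_powr:
  fixes r :: "nat \<Rightarrow> real"
  assumes "finite S" "S \<noteq> {}" "\<And>j. j \<in> S \<Longrightarrow> 0 < r j" "0 < e"
  shows "Max ((\<lambda>j. r j powr e) ` S) = Max (r ` S) powr e"
    and "Min ((\<lambda>j. r j powr e) ` S) = Min (r ` S) powr e"
proof -
  have fin: "finite (r ` S)" "r ` S \<noteq> {}" using assms by auto
  show "Max ((\<lambda>j. r j powr e) ` S) = Max (r ` S) powr e"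
  proof (rule Max_eqI)
    show "finite ((\<lambda>j. r j powr e) ` S)" using assms by simp
    fix z assume "z \<in> (\<lambda>j. r j powr e) ` S"
    then obtain j where j: "j \<in> S" "z = r j powr e" by auto
    have "r j \<le> Max (r ` S)" using fin j by simp
    moreover have "0 \<le> r j" using assms(3)[OF j(1)] by simp
    ultimately show "z \<le> Max (r ` S) powr e" using j assms(4) by (simp add: powr_mono2)
  next
    have "Max (r ` S) \<in> r ` S" using fin by (rule Max_in)
    then show "Max (r ` S) powr e \<in> (\<lambda>j. r j powr e) ` S" by auto
  qed
  show "Min ((\<lambda>j. r j powr e) ` S) = Min (r ` S) powr e"
  proof (rule Min_eqI)
    show "finite ((\<lambda>j. r j powr e) ` S)" using assms by simp
    fix z assume "z \<in> (\<lambda>j. r j powr e) ` S"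
    then obtain j where j: "j \<in> S" "z = r j powr e" by auto
    have "Min (r ` S) \<le> r j" using fin j by simp
    moreover have "0 \<le> Min (r ` S)" using fin assms(3) by (simp add: Min_ge_iff order_less_imp_le)
    ultimately show "Min (r ` S) powr e \<le> z" using j assms(4) by (simp add: powr_mono2)
  next
    have "Min (r ` S) \<in> r ` S" using fin by (rule Min_in)
    then show "Min (r ` S) powr e \<in> (\<lambda>j. r j powr e) ` S" by auto
  qed
qed

lemma finite_tidx: "finite (tidx m d)"
  unfolding tidx_def by (rule finite_PiE) auto

lemma tidx_lt: "J \<in> tidx m d \<Longrightarrow> l < m \<Longrightarrow> J l < d l"
  unfolding tidx_def by (auto simp: PiE_def Pi_def)

lemma grad_bounds:
  assumes fnonneg: "\<forall>J\<in>tidx m d. 0 \<le> f J"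
    and lo: "\<And>l. l \<in> {..<m} - {k} \<Longrightarrow> 0 \<le> lo l"
    and ypos: "\<And>l j. l \<in> {..<m} - {k} \<Longrightarrow> j < d l \<Longrightarrow> 0 \<le> y l j"
    and bnd: "\<And>l j. l \<in> {..<m} - {k} \<Longrightarrow> j < d l \<Longrightarrow>
                 lo l * y l j \<le> x l j \<and> x l j \<le> hi l * y l j"
  shows "(\<Prod>l\<in>{..<m}-{k}. lo l) * grad m d f k y a \<le> grad m d f k x a \<and>
         grad m d f k x a \<le> (\<Prod>l\<in>{..<m}-{k}. hi l) * grad m d f k y a"
proof -
  let ?A = "{J\<in>tidx m d. J k = a}"
  have t: "f J * (\<Prod>l\<in>{..<m}-{k}. lo l) * (\<Prod>l\<in>{..<m}-{k}. y l (J l)) \<le> f J * (\<Prod>l\<in>{..<m}-{k}. x l (J l)) \<and>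
        f J * (\<Prod>l\<in>{..<m}-{k}. x l (J l)) \<le> f J * (\<Prod>l\<in>{..<m}-{k}. hi l) * (\<Prod>l\<in>{..<m}-{k}. y l (J l))"
    if J: "J \<in> ?A" for J
  proof -
    have Jl: "\<And>l. l \<in> {..<m} - {k} \<Longrightarrow> J l < d l" using J tidx_lt by auto
    have xnn: "\<And>l. l \<in> {..<m} - {k} \<Longrightarrow> 0 \<le> x l (J l)"
      proof - fix l assume l: "l \<in> {..<m} - {k}" have "0 \<le> lo l * y l (J l)" using lo[OF l] ypos[OF l Jl[OF l]] by simp then show "0 \<le> x l (J l)" using bnd[OF l Jl[OF l]] by linarith qed
    have "(\<Prod>l\<in>{..<m}-{k}. lo l) * (\<Prod>l\<in>{..<m}-{k}. y l (J l)) = (\<Prod>l\<in>{..<m}-{k}. lo l * y l (J l))"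
      by (simp add: prod.distrib)
    also have "\<dots> \<le> (\<Prod>l\<in>{..<m}-{k}. x l (J l))"
      by (rule prod_mono) (use lo ypos bnd Jl in auto)
    finally have 1: "(\<Prod>l\<in>{..<m}-{k}. lo l) * (\<Prod>l\<in>{..<m}-{k}. y l (J l)) \<le> (\<Prod>l\<in>{..<m}-{k}. x l (J l))" .
    have "(\<Prod>l\<in>{..<m}-{k}. x l (J l)) \<le> (\<Prod>l\<in>{..<m}-{k}. hi l * y l (J l))"
      by (rule prod_mono) (use xnn bnd Jl in auto)
    also have "\<dots> = (\<Prod>l\<in>{..<m}-{k}. hi l) * (\<Prod>l\<in>{..<m}-{k}. y l (J l))"
      by (simp add: prod.distrib)
    finally have 2: "(\<Prod>l\<in>{..<m}-{k}. x l (J l)) \<le> (\<Prod>l\<in>{..<m}-{k}. hi l) * (\<Prod>l\<in>{..<m}-{k}. y l (J l))" .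
    have fJ: "0 \<le> f J" using J fnonneg by auto
    show ?thesis using mult_left_mono[OF 1 fJ] mult_left_mono[OF 2 fJ] by (simp add: mult.assoc)
  qed
  have "(\<Prod>l\<in>{..<m}-{k}. lo l) * grad m d f k y a = (\<Sum>J\<in>?A. f J * (\<Prod>l\<in>{..<m}-{k}. lo l) * (\<Prod>l\<in>{..<m}-{k}. y l (J l)))"
    unfolding grad_def by (simp add: sum_distrib_left mult_ac)
  also have "\<dots> \<le> grad m d f k x a" unfolding grad_def by (rule sum_mono) (use t in auto)
  finally have A: "(\<Prod>l\<in>{..<m}-{k}. lo l) * grad m d f k y a \<le> grad m d f k x a" .
  have "grad m d f k x a \<le> (\<Sum>J\<in>?A. f J * (\<Prod>l\<in>{..<m}-{k}. hi l) * (\<Prod>l\<in>{..<m}-{k}. y l (J l)))"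
    unfolding grad_def by (rule sum_mono) (use t in auto)
  also have "\<dots> = (\<Prod>l\<in>{..<m}-{k}. hi l) * grad m d f k y a"
    unfolding grad_def by (simp add: sum_distrib_left mult_ac)
  finally show ?thesis using A by simp
qed

lemma irr_witness:
  assumes irr: "weakly_irreducible m d f" and dpos: "\<forall>k<m. 0 < d k"
    and m2: "2 \<le> m" and k: "k < m" and a: "a < d k"
  shows "\<exists>J\<in>tidx m d. J k = a \<and> 0 < f J"
proof -
  define l where "l = (if k = 0 then 1 else (0::nat))"
  have l: "l < m" "l \<noteq> k" using m2 k by (auto simp: l_def)
  define V where "V = {(k, a). k < m \<and> a < d k}"
  define E where "E = {((k, a), (l, b)). (k, a) \<in> V \<and> (l, b) \<in> V \<and> k \<noteq> l \<and>
                 (\<exists>J\<in>tidx m d. J k = a \<and> J l = b \<and> f J > 0)}"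
  have all: "\<forall>u\<in>V. \<forall>v\<in>V. (u, v) \<in> E\<^sup>*" using irr
    unfolding weakly_irreducible_def Let_def V_def E_def by simp
  have "(k, a) \<in> V" "(l, 0) \<in> V" using k a l dpos unfolding V_def by auto
  then have "((k, a), (l, 0)) \<in> E\<^sup>*" using all by blast
  then show ?thesis
  proof (rule converse_rtranclE)
    assume "(k, a) = (l, 0)" then show ?thesis using l by simp
  next
    fix w assume "((k, a), w) \<in> E"
    then show ?thesis unfolding E_def by auto
  qed
qed

lemma grad_pos:
  assumes irr: "weakly_irreducible m d f" and dpos: "\<forall>k<m. 0 < d k"
    and fnonneg: "\<forall>J\<in>tidx m d. 0 \<le> f J"
    and m2: "2 \<le> m" and k: "k < m" and a: "a < d k"
    and xpos: "\<And>l j. l < m \<Longrightarrow> l \<noteq> k \<Longrightarrow> j < d l \<Longrightarrow> 0 < x l j"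
  shows "0 < grad m d f k x a"
proof -
  obtain J where J: "J \<in> tidx m d" "J k = a" "0 < f J" using irr_witness[OF irr dpos m2 k a] by blast
  have nn: "0 \<le> f J' * (\<Prod>l\<in>{..<m}-{k}. x l (J' l))" if "J' \<in> tidx m d" for J'
  proof -
    have "0 \<le> (\<Prod>l\<in>{..<m}-{k}. x l (J' l))"
      by (rule prod_nonneg) (use that xpos tidx_lt[OF that] in \<open>auto intro: less_imp_le\<close>)
    then show ?thesis using that fnonneg by simp
  qed
  have "0 < f J * (\<Prod>l\<in>{..<m}-{k}. x l (J l))"
    using J xpos tidx_lt[OF J(1)] by (auto intro!: mult_pos_pos prod_pos)
  then show ?thesis unfolding grad_def
    by (intro sum_pos2[where i=J]) (use J nn finite_tidx in auto)
qed

lemma pnorm_pos: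
  assumes "0 < n" "\<And>j. j < n \<Longrightarrow> 0 < v j"
  shows "0 < pnorm p n v"
proof -
  have "0 < (\<Sum>j<n. \<bar>v j\<bar> powr p)"
    using assms by (intro sum_pos) (auto simp: less_imp_neq[symmetric])
  then show ?thesis unfolding pnorm_def by simp
qed

lemma psi_pos: "0 < v j \<Longrightarrow> psi q v j = v j powr (q - 1)"
  unfolding psi_def by simp

lemma conj_exp_m1: "1 < p \<Longrightarrow> conj_exp p - 1 = 1 / (p - 1)"
  unfolding conj_exp_def by (simp add: field_simps)

lemma powr_cancel_exp: "1 < p \<Longrightarrow> 0 < C \<Longrightarrow> (C powr (conj_exp p - 1)) powr (p - 1) = C"
  by (simp add: powr_powr conj_exp_m1)



theorem proposition9:
  fixes m :: nat and d :: "nat \<Rightarrow> nat" and f :: "(nat \<Rightarrow> nat) \<Rightarrow> real"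
    and p :: "nat \<Rightarrow> real" and i :: nat
  assumes dpos: "\<forall>k<m. 0 < d k"
    and fnonneg: "\<forall>J\<in>tidx m d. 0 \<le> f J"
    and irr: "weakly_irreducible m d f"
    and prange: "\<forall>k<m. 1 < p k"
    and i: "i < m"
    and pcond: "\<forall>k<m. k \<noteq> i \<longrightarrow> (real m - 1) * conj_exp (p i) \<le> p k"
  shows "\<forall>x\<in>S_pp m d p i. \<forall>y\<in>S_pp m d p i.
           mu m d p i (G_map m d f p i x) (G_map m d f p i y) \<le> mu m d p i x y"
proof (intro ballI)
  fix x y assume xS: "x \<in> S_pp m d p i" and yS: "y \<in> S_pp m d p i"
  define K where "K = {..<m} - {i}"
  have finK: "finite K" unfolding K_def by simp
  show "mu m d p i (G_map m d f p i x) (G_map m d f p i y) \<le> mu m d p i x y"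
  proof (cases "m = 1")
    case True
    then have "{..<m} - {i} = {}" using i by auto
    then show ?thesis unfolding mu_def by (simp only:) simp
  next
    case False
    then have m2: "2 \<le> m" using i by linarith
    have xpos: "\<And>l j. l < m \<Longrightarrow> l \<noteq> i \<Longrightarrow> j < d l \<Longrightarrow> 0 < x l j"
      using xS unfolding S_pp_def by auto
    have ypos: "\<And>l j. l < m \<Longrightarrow> l \<noteq> i \<Longrightarrow> j < d l \<Longrightarrow> 0 < y l j"
      using yS unfolding S_pp_def by auto
    define a where "a l = Min ((\<lambda>j. x l j / y l j) ` {..<d l})" for l
    define b where "b l = Max ((\<lambda>j. x l j / y l j) ` {..<d l})" for l
    have ab: "0 < a l \<and> a l \<le> b l \<and> (\<forall>j<d l. a l * y l j \<le> x l j \<and> x l j \<le> b l * y l j)"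
      if l: "l \<in> K" for l
    proof -
      have lm: "l < m" "l \<noteq> i" using l unfolding K_def by auto
      have dl: "0 < d l" using dpos lm by auto
      have fin: "finite ((\<lambda>j. x l j / y l j) ` {..<d l})" "(\<lambda>j. x l j / y l j) ` {..<d l} \<noteq> {}"
        using dl by auto
      have rp: "\<And>j. j < d l \<Longrightarrow> 0 < x l j / y l j" using xpos ypos lm by simp
      have apos: "0 < a l" unfolding a_def using fin rp by (simp add: Min_gr_iff)
      have le1: "a l \<le> x l j / y l j" if "j < d l" for j unfolding a_def using fin that by simp
      have le2: "x l j / y l j \<le> b l" if "j < d l" for j unfolding b_def using fin that by simp
      have "a l \<le> b l" using le1[of 0] le2[of 0] dl by linarith
      moreover have "\<forall>j<d l. a l * y l j \<le> x l j \<and> x l j \<le> b l * y l j"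
      proof (intro allI impI)
        fix j assume j: "j < d l"
        have yp: "0 < y l j" using ypos lm j by simp
        show "a l * y l j \<le> x l j \<and> x l j \<le> b l * y l j"
          using le1[OF j] le2[OF j] yp by (simp add: pos_le_divide_eq pos_divide_le_eq)
      qed
      ultimately show ?thesis using apos by simp
    qed
    define e where "e = conj_exp (p i) - 1"
    have pi1: "1 < p i" using prange i by simp
    have epos: "0 < e" unfolding e_def using conj_exp_m1[OF pi1] pi1 by simp
    define A where "A = (\<Prod>l\<in>K. a l)"
    define B where "B = (\<Prod>l\<in>K. b l)"
    have Apos: "0 < A" unfolding A_def using ab by (simp add: prod_pos)
    have Bpos: "0 < B" unfolding B_def using ab by (intro prod_pos) (meson less_le_trans)
    define gx where "gx = grad m d f i x"
    define gy where "gy = grad m d f i y"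
    have gxpos: "\<And>j. j < d i \<Longrightarrow> 0 < gx j" unfolding gx_def
      using grad_pos[OF irr dpos fnonneg m2 i] xpos by blast
    have gypos: "\<And>j. j < d i \<Longrightarrow> 0 < gy j" unfolding gy_def
      using grad_pos[OF irr dpos fnonneg m2 i] ypos by blast
    have g_bnd: "A * gy j \<le> gx j \<and> gx j \<le> B * gy j" for j
      unfolding A_def B_def gx_def gy_def K_def
      by (rule grad_bounds[OF fnonneg]) (use ab ypos in \<open>auto simp: K_def intro: less_imp_le\<close>)
    define ux where "ux = psi (conj_exp (p i)) gx"
    define uy where "uy = psi (conj_exp (p i)) gy"
    have uxe: "\<And>j. j < d i \<Longrightarrow> ux j = gx j powr e" unfolding ux_def e_def using gxpos psi_pos by blast
    have uye: "\<And>j. j < d i \<Longrightarrow> uy j = gy j powr e" unfolding uy_def e_def using gypos psi_pos by blast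
    have uxpos: "\<And>j. j < d i \<Longrightarrow> 0 < ux j" proof - fix j assume j: "j < d i" have "gx j \<noteq> 0" using gxpos[OF j] by simp then show "0 < ux j" by (simp add: uxe[OF j]) qed
    have uypos: "\<And>j. j < d i \<Longrightarrow> 0 < uy j" proof - fix j assume j: "j < d i" have "gy j \<noteq> 0" using gypos[OF j] by simp then show "0 < uy j" by (simp add: uye[OF j]) qed
    have u_bnd: "A powr e * uy j \<le> ux j \<and> ux j \<le> B powr e * uy j" if j: "j < d i" for j
    proof -
      have "(A * gy j) powr e \<le> gx j powr e"
        using g_bnd[of j] Apos gypos[OF j] epos by (intro powr_mono2) auto
      moreover have "gx j powr e \<le> (B * gy j) powr e"
        using g_bnd[of j] gxpos[OF j] epos by (intro powr_mono2) auto
      ultimately show ?thesis using uxe[OF j] uye[OF j] Apos Bpos gypos[OF j]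
        by (simp add: powr_mult)
    qed
    define x' where "x' = x(i := ux)"
    define y' where "y' = y(i := uy)"
    define lo where "lo = a(i := A powr e)"
    define hi where "hi = b(i := B powr e)"
    have lopos: "\<And>l. l < m \<Longrightarrow> 0 < lo l" unfolding lo_def using ab Apos by (auto simp: K_def)
    have hipos: "\<And>l. l < m \<Longrightarrow> 0 < hi l" unfolding hi_def using ab Bpos
      by (auto simp: K_def intro: less_le_trans)
    have x'pos: "\<And>l j. l < m \<Longrightarrow> j < d l \<Longrightarrow> 0 < x' l j"
      unfolding x'_def using xpos uxpos by auto
    have y'pos: "\<And>l j. l < m \<Longrightarrow> j < d l \<Longrightarrow> 0 < y' l j"
      unfolding y'_def using ypos uypos by auto
    have x'bnd: "\<And>l j. l < m \<Longrightarrow> j < d l \<Longrightarrow> lo l * y' l j \<le> x' l j \<and> x' l j \<le> hi l * y' l j"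
      unfolding x'_def y'_def lo_def hi_def using ab u_bnd by (auto simp: K_def)
    have Kterm: "0 < Max ((\<lambda>j. (G_map m d f p i x k j / G_map m d f p i y k j) powr (p k - 1)) ` {..<d k}) /
                     Min ((\<lambda>j. (G_map m d f p i x k j / G_map m d f p i y k j) powr (p k - 1)) ` {..<d k})
        \<and> ln (Max ((\<lambda>j. (G_map m d f p i x k j / G_map m d f p i y k j) powr (p k - 1)) ` {..<d k}) /
                     Min ((\<lambda>j. (G_map m d f p i x k j / G_map m d f p i y k j) powr (p k - 1)) ` {..<d k}))
          \<le> ln (\<Prod>l\<in>{..<m}-{k}. hi l) - ln (\<Prod>l\<in>{..<m}-{k}. lo l)"
      if k: "k \<in> K" for k
    proof -
      have km: "k < m" "k \<noteq> i" using k unfolding K_def by auto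
      have pk1: "1 < p k" using prange km by simp
      define ek where "ek = conj_exp (p k) - 1"
      have ekpos: "0 < ek" unfolding ek_def using conj_exp_m1[OF pk1] pk1 by simp
      define C where "C = (\<Prod>l\<in>{..<m}-{k}. lo l)"
      define D where "D = (\<Prod>l\<in>{..<m}-{k}. hi l)"
      have Cpos: "0 < C" unfolding C_def using lopos by (intro prod_pos) auto
      have Dpos: "0 < D" unfolding D_def using hipos by (intro prod_pos) auto
      define hx where "hx = grad m d f k x'"
      define hy where "hy = grad m d f k y'"
      have hxpos: "\<And>j. j < d k \<Longrightarrow> 0 < hx j" unfolding hx_def
        using grad_pos[OF irr dpos fnonneg m2 km(1)] x'pos by blast
      have hypos: "\<And>j. j < d k \<Longrightarrow> 0 < hy j" unfolding hy_def
        using grad_pos[OF irr dpos fnonneg m2 km(1)] y'pos by blast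
      have h_bnd: "C * hy j \<le> hx j \<and> hx j \<le> D * hy j" for j
        unfolding C_def D_def hx_def hy_def
        by (rule grad_bounds[OF fnonneg]) (use lopos y'pos x'bnd in \<open>auto intro: less_imp_le\<close>)
      define sx where "sx = s_map m d f p i k x"
      define sy where "sy = s_map m d f p i k y"
      have sxe: "\<And>j. j < d k \<Longrightarrow> sx j = hx j powr ek"
        unfolding sx_def s_map_def hx_def x'_def ux_def gx_def ek_def
        using hxpos[unfolded hx_def x'_def ux_def gx_def] psi_pos by blast
      have sye: "\<And>j. j < d k \<Longrightarrow> sy j = hy j powr ek"
        unfolding sy_def s_map_def hy_def y'_def uy_def gy_def ek_def
        using hypos[unfolded hy_def y'_def uy_def gy_def] psi_pos by blast
      have sxpos: "\<And>j. j < d k \<Longrightarrow> 0 < sx j" proof - fix j assume j: "j < d k" have "hx j \<noteq> 0" using hxpos[OF j] by simp then show "0 < sx j" by (simp add: sxe[OF j]) qed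
      have sypos: "\<And>j. j < d k \<Longrightarrow> 0 < sy j" proof - fix j assume j: "j < d k" have "hy j \<noteq> 0" using hypos[OF j] by simp then show "0 < sy j" by (simp add: sye[OF j]) qed
      have s_bnd: "C powr ek * sy j \<le> sx j \<and> sx j \<le> D powr ek * sy j" if j: "j < d k" for j
      proof -
        have "(C * hy j) powr ek \<le> hx j powr ek"
          using h_bnd[of j] Cpos hypos[OF j] ekpos by (intro powr_mono2) auto
        moreover have "hx j powr ek \<le> (D * hy j) powr ek"
          using h_bnd[of j] hxpos[OF j] ekpos by (intro powr_mono2) auto
        ultimately show ?thesis using sxe[OF j] sye[OF j] Cpos Dpos hypos[OF j]
          by (simp add: powr_mult)
      qed
      define nx where "nx = pnorm (p k) (d k) sx"
      define ny where "ny = pnorm (p k) (d k) sy"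
      have dk: "0 < d k" using dpos km by simp
      have nxpos: "0 < nx" unfolding nx_def using pnorm_pos[OF dk] sxpos by blast
      have nypos: "0 < ny" unfolding ny_def using pnorm_pos[OF dk] sypos by blast
      define \<rho> where "\<rho> = ny / nx"
      have rpos: "0 < \<rho>" unfolding \<rho>_def using nxpos nypos by simp
      have Geq: "G_map m d f p i x k j / G_map m d f p i y k j = \<rho> * (sx j / sy j)" for j
        unfolding G_map_def \<rho>_def nx_def ny_def sx_def sy_def using nxpos nypos
        by (simp add: field_simps nx_def ny_def sx_def sy_def)
      have qb: "\<rho> powr (p k - 1) * C \<le> (G_map m d f p i x k j / G_map m d f p i y k j) powr (p k - 1) \<and>
                (G_map m d f p i x k j / G_map m d f p i y k j) powr (p k - 1) \<le> \<rho> powr (p k - 1) * D"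
        if j: "j \<in> {..<d k}" for j
      proof -
        have jj: "j < d k" using j by simp
        have r1: "\<rho> * C powr ek \<le> \<rho> * (sx j / sy j)"
          using s_bnd[OF jj] sypos[OF jj] rpos by (simp add: pos_le_divide_eq)
        have r2: "\<rho> * (sx j / sy j) \<le> \<rho> * D powr ek"
          using s_bnd[OF jj] sypos[OF jj] rpos by (simp add: pos_divide_le_eq)
        have p0: "0 \<le> p k - 1" using pk1 by simp
        have "(\<rho> * C powr ek) powr (p k - 1) \<le> (\<rho> * (sx j / sy j)) powr (p k - 1)"
          using r1 rpos Cpos p0 by (intro powr_mono2) auto
        moreover have "(\<rho> * (sx j / sy j)) powr (p k - 1) \<le> (\<rho> * D powr ek) powr (p k - 1)"
          using r2 rpos sxpos[OF jj] sypos[OF jj] p0 by (intro powr_mono2) auto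
        moreover have "(\<rho> * C powr ek) powr (p k - 1) = \<rho> powr (p k - 1) * C"
          using powr_cancel_exp[OF pk1 Cpos] rpos Cpos unfolding ek_def by (simp add: powr_mult)
        moreover have "(\<rho> * D powr ek) powr (p k - 1) = \<rho> powr (p k - 1) * D"
          using powr_cancel_exp[OF pk1 Dpos] rpos Dpos unfolding ek_def by (simp add: powr_mult)
        ultimately show ?thesis unfolding Geq by simp
      qed
      have "0 < \<rho> powr (p k - 1) * C" using rpos Cpos by simp
      note pp = this
      have "0 < Max ((\<lambda>j. (G_map m d f p i x k j / G_map m d f p i y k j) powr (p k - 1)) ` {..<d k}) /
                     Min ((\<lambda>j. (G_map m d f p i x k j / G_map m d f p i y k j) powr (p k - 1)) ` {..<d k})
        \<and> ln (Max ((\<lambda>j. (G_map m d f p i x k j / G_map m d f p i y k j) powr (p k - 1)) ` {..<d k}) /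
                     Min ((\<lambda>j. (G_map m d f p i x k j / G_map m d f p i y k j) powr (p k - 1)) ` {..<d k}))
          \<le> ln (\<rho> powr (p k - 1) * D) - ln (\<rho> powr (p k - 1) * C)"
        by (rule max_min_bound[where S="{..<d k}" and q="\<lambda>j. (G_map m d f p i x k j / G_map m d f p i y k j) powr (p k - 1)"])
           (use dk pp qb in auto)
      moreover have "ln (\<rho> powr (p k - 1) * D) - ln (\<rho> powr (p k - 1) * C) = ln D - ln C"
        using rpos Cpos Dpos by (simp add: ln_mult)
      ultimately show ?thesis unfolding C_def D_def by simp
    qed
    define L where "L l = ln (b l) - ln (a l)" for l
    define S where "S = (\<Sum>l\<in>K. L l)"
    have Lnn: "0 \<le> L l" if "l \<in> K" for l
    proof -
      have "0 < a l" "a l \<le> b l" using ab[OF that] by auto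
      then show ?thesis unfolding L_def by simp
    qed
    have lnAB: "ln A = (\<Sum>l\<in>K. ln (a l))" "ln B = (\<Sum>l\<in>K. ln (b l))"
    proof -
      have an: "\<And>l. l \<in> K \<Longrightarrow> a l \<noteq> 0" using ab by (metis less_irrefl)
      have bn: "\<And>l. l \<in> K \<Longrightarrow> b l \<noteq> 0" using ab by (metis less_le_trans less_irrefl)
      show "ln A = (\<Sum>l\<in>K. ln (a l))" unfolding A_def using an finK by (rule ln_prod[rotated])
      show "ln B = (\<Sum>l\<in>K. ln (b l))" unfolding B_def using bn finK by (rule ln_prod[rotated])
    qed
    have lnDC: "ln (\<Prod>l\<in>{..<m}-{k}. hi l) - ln (\<Prod>l\<in>{..<m}-{k}. lo l) = e * S + (S - L k)"
      if k: "k \<in> K" for k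
    proof -
      have eqs: "{..<m}-{k} = insert i (K - {k})" "i \<notin> K - {k}" "finite (K - {k})"
        using k i finK unfolding K_def by auto
      have "ln (\<Prod>l\<in>{..<m}-{k}. hi l) = (\<Sum>l\<in>{..<m}-{k}. ln (hi l))"
        using hipos by (intro ln_prod) (simp, metis Diff_iff lessThan_iff less_irrefl)
      also have "\<dots> = ln (hi i) + (\<Sum>l\<in>K-{k}. ln (b l))"
      proof -
        have "\<And>l. l \<in> K - {k} \<Longrightarrow> hi l = b l" unfolding hi_def K_def by auto
        then have "(\<Sum>l\<in>K-{k}. ln (hi l)) = (\<Sum>l\<in>K-{k}. ln (b l))" by (intro sum.cong) auto
        then show ?thesis unfolding eqs(1) using eqs(2,3) by simp
      qed
      also have "ln (hi i) = e * ln B" using Bpos by (simp add: hi_def ln_powr)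
      finally have 1: "ln (\<Prod>l\<in>{..<m}-{k}. hi l) = e * ln B + (\<Sum>l\<in>K-{k}. ln (b l))" .
      have "ln (\<Prod>l\<in>{..<m}-{k}. lo l) = (\<Sum>l\<in>{..<m}-{k}. ln (lo l))"
        using lopos by (intro ln_prod) (simp, metis Diff_iff lessThan_iff less_irrefl)
      also have "\<dots> = ln (lo i) + (\<Sum>l\<in>K-{k}. ln (a l))"
      proof -
        have "\<And>l. l \<in> K - {k} \<Longrightarrow> lo l = a l" unfolding lo_def K_def by auto
        then have "(\<Sum>l\<in>K-{k}. ln (lo l)) = (\<Sum>l\<in>K-{k}. ln (a l))" by (intro sum.cong) auto
        then show ?thesis unfolding eqs(1) using eqs(2,3) by simp
      qed
      also have "ln (lo i) = e * ln A" using Apos by (simp add: lo_def ln_powr)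
      finally have 2: "ln (\<Prod>l\<in>{..<m}-{k}. lo l) = e * ln A + (\<Sum>l\<in>K-{k}. ln (a l))" .
      have 3: "(\<Sum>l\<in>K-{k}. ln (b l)) - (\<Sum>l\<in>K-{k}. ln (a l)) = (\<Sum>l\<in>K-{k}. L l)"
        unfolding L_def by (simp add: sum_subtractf)
      have 4: "(\<Sum>l\<in>K-{k}. L l) = S - L k" unfolding S_def using k finK by (simp add: sum_diff1)
      have 5: "ln B - ln A = S" unfolding lnAB S_def L_def by (simp add: sum_subtractf)
      show ?thesis using 1 2 3 4 5 by (simp add: algebra_simps)
    qed
    define T where "T k = Max ((\<lambda>j. (G_map m d f p i x k j / G_map m d f p i y k j) powr (p k - 1)) ` {..<d k}) /
                     Min ((\<lambda>j. (G_map m d f p i x k j / G_map m d f p i y k j) powr (p k - 1)) ` {..<d k})" for k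
    have "mu m d p i (G_map m d f p i x) (G_map m d f p i y) = ln (\<Prod>k\<in>K. T k)"
      unfolding mu_def T_def K_def by simp
    also have "\<dots> = (\<Sum>k\<in>K. ln (T k))"
    proof (rule ln_prod[OF finK])
      fix k assume k: "k \<in> K"
      have "0 < T k" using Kterm[OF k] unfolding T_def by (rule conjunct1)
      then show "T k \<noteq> 0" by simp
    qed
    also have "\<dots> \<le> (\<Sum>k\<in>K. e * S + (S - L k))"
    proof (rule sum_mono)
      fix k assume k: "k \<in> K"
      have "ln (T k) \<le> ln (\<Prod>l\<in>{..<m}-{k}. hi l) - ln (\<Prod>l\<in>{..<m}-{k}. lo l)"
        using Kterm[OF k] unfolding T_def by (rule conjunct2)
      then show "ln (T k) \<le> e * S + (S - L k)" using lnDC[OF k] by simp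
    qed
    also have "\<dots> = (\<Sum>k\<in>K. (e * S + S) - L k)" by (simp add: algebra_simps)
    also have "\<dots> = real (card K) * (e * S + S) - S"
      by (simp only: sum_subtractf sum_constant S_def)
    finally have lhs: "mu m d p i (G_map m d f p i x) (G_map m d f p i y) \<le> real (card K) * (e * S + S) - S" .
    have termx: "ln (Max ((\<lambda>j. (x l j / y l j) powr (p l - 1)) ` {..<d l}) /
                     Min ((\<lambda>j. (x l j / y l j) powr (p l - 1)) ` {..<d l})) = (p l - 1) * L l"
      if l: "l \<in> K" for l
    proof -
      have lm: "l < m" "l \<noteq> i" using l unfolding K_def by auto
      have dl: "0 < d l" using dpos lm by auto
      have pl: "0 < p l - 1" using prange lm by simp
      have rp: "\<And>j. j \<in> {..<d l} \<Longrightarrow> 0 < x l j / y l j" using xpos ypos lm by simp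
      have "Max ((\<lambda>j. (x l j / y l j) powr (p l - 1)) ` {..<d l}) = b l powr (p l - 1)"
        unfolding b_def by (rule max_min_powr(1)[where S="{..<d l}" and r="\<lambda>j. x l j / y l j"]) (use rp pl dl in auto)
      moreover have "Min ((\<lambda>j. (x l j / y l j) powr (p l - 1)) ` {..<d l}) = a l powr (p l - 1)"
        unfolding a_def by (rule max_min_powr(2)[where S="{..<d l}" and r="\<lambda>j. x l j / y l j"]) (use rp pl dl in auto)
      ultimately show ?thesis using ab[OF l] unfolding L_def
        by (simp add: ln_div ln_powr algebra_simps)
    qed
    have "mu m d p i x y = (\<Sum>l\<in>K. ln (Max ((\<lambda>j. (x l j / y l j) powr (p l - 1)) ` {..<d l}) /
                     Min ((\<lambda>j. (x l j / y l j) powr (p l - 1)) ` {..<d l})))"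
    proof -
      have pos: "0 < Max ((\<lambda>j. (x l j / y l j) powr (p l - 1)) ` {..<d l}) /
                     Min ((\<lambda>j. (x l j / y l j) powr (p l - 1)) ` {..<d l})" if l: "l \<in> K" for l
      proof -
        have lm: "l < m" "l \<noteq> i" using l unfolding K_def by auto
        have dl: "0 < d l" using dpos lm by auto
        have rp: "0 < (x l j / y l j) powr (p l - 1)" if "j \<in> {..<d l}" for j
        proof -
          have "0 < x l j" "0 < y l j" using xpos ypos lm that by auto
          then show ?thesis by simp
        qed
        have "(\<lambda>j. (x l j / y l j) powr (p l - 1)) ` {..<d l} \<noteq> {}" using dl by auto
        note ne = this
        have fi: "finite ((\<lambda>j. (x l j / y l j) powr (p l - 1)) ` {..<d l})" by simp
        have "0 < Max ((\<lambda>j. (x l j / y l j) powr (p l - 1)) ` {..<d l})"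
          unfolding Max_gr_iff[OF fi ne] using rp dl by blast
        moreover have "0 < Min ((\<lambda>j. (x l j / y l j) powr (p l - 1)) ` {..<d l})"
          unfolding Min_gr_iff[OF fi ne] using rp by blast
        ultimately show ?thesis by simp
      qed
      show ?thesis unfolding mu_def K_def[symmetric]
      proof (rule ln_prod[OF finK])
        fix l assume "l \<in> K"
        from pos[OF this] show "Max ((\<lambda>j. (x l j / y l j) powr (p l - 1)) ` {..<d l}) /
                     Min ((\<lambda>j. (x l j / y l j) powr (p l - 1)) ` {..<d l}) \<noteq> 0" by (metis less_irrefl)
      qed
    qed
    also have "\<dots> = (\<Sum>l\<in>K. (p l - 1) * L l)" using termx by simp
    finally have rhs: "mu m d p i x y = (\<Sum>l\<in>K. (p l - 1) * L l)" .
    have cK: "real (card K) = real m - 1" unfolding K_def using i by (simp add: of_nat_diff)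
    have coef: "(real m - 1) * (e + 1) - 1 \<le> p l - 1" if "l \<in> K" for l
      using pcond that unfolding K_def e_def by auto
    have "real (card K) * (e * S + S) - S = (\<Sum>l\<in>K. ((real m - 1) * (e + 1) - 1) * L l)"
    proof -
      have "(\<Sum>l\<in>K. ((real m - 1) * (e + 1) - 1) * L l) = ((real m - 1) * (e + 1) - 1) * S"
        unfolding S_def by (rule sum_distrib_left[symmetric])
      then show ?thesis unfolding cK by (simp add: algebra_simps)
    qed
    also have "\<dots> \<le> (\<Sum>l\<in>K. (p l - 1) * L l)"
      using coef Lnn by (intro sum_mono mult_right_mono) auto
    finally show ?thesis using lhs rhs by simp
  qed
qed

end
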